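(* Let $(A,+,\circ)$ be a skew brace of abelian type (possibly infinite). The following are equivalent: (i) $A$ is $*$-nilpotent; (ii) $A$ is right $*$-nilpotent and $(A,\circ)$ is nilpotent; (iii) $A$ is centrally nilpotent.
   Context: A skew brace is a triple $(A,+,\circ)$ where $(A,+)$ and $(A,\circ)$ are groups (written additively for $+$) such that $x\circ(y+z)=(x\circ y)-x+(x\circ z)$ for all $x,y,z\in A$; the common neutral element is $0$. It is of abelian type if $(A,+)$ is abelian. Let $\lambda_x(y)=-x+(x\circ y)$ and $x*y=\lambda_x(y)-y$; $[x,y]_+=x+y-x-y$. For subsets $X,Y$, $X*Y$ is the subgroup of $(A,+)$ generated by $\{x*y\}$. Left and right series: $A^1=A$, $A^{n+1}=A*A^n$; $A^{(1)}=A$, $A^{(n+1)}=A^{(n)}*A$. $A$ is left (resp. right) $*$-nilpotent if $A^n=0$ (resp. $A^{(n)}=0$) for some $n$, and $*$-nilpotent if both. An ideal is a subgroup $I$ of $(A,+)$ with $\lambda_a(I)\subseteq I$ for all $a\in A$ that is normal in both $(A,+)$ and $(A,\circ)$. The center is $\zeta(A)=\{x\in A: x*y=y*x=[x,y]_+=0\ \forall y\in A\}$. $A$ is centrally nilpotent if there is a chain of ideals $0=I_0\leq\dots\leq I_n=A$ with $I_{j+1}/I_j\leq\zeta(A/I_j)$ for all $j$. *)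

theory Defs
  imports "HOL-Algebra.Algebra"
begin

text \<open>A skew brace of abelian type: the additive group is the ambient type
  (of class ab_group_add), the multiplicative group is given by circ.\<close>

definition circ_group :: "('a::ab_group_add \<Rightarrow> 'a \<Rightarrow> 'a) \<Rightarrow> 'a monoid" where
  "circ_group circ = \<lparr>carrier = UNIV, monoid.mult = circ, one = 0\<rparr>"

definition skew_brace_abelian :: "('a::ab_group_add \<Rightarrow> 'a \<Rightarrow> 'a) \<Rightarrow> bool" where
  "skew_brace_abelian circ \<longleftrightarrow> group (circ_group circ) \<and>
     (\<forall>x y z. circ x (y + z) = circ x y - x + circ x z)"

definition lam :: "('a::ab_group_add \<Rightarrow> 'a \<Rightarrow> 'a) \<Rightarrow> 'a \<Rightarrow> 'a \<Rightarrow> 'a" where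
  "lam circ x y = - x + circ x y"

definition star :: "('a::ab_group_add \<Rightarrow> 'a \<Rightarrow> 'a) \<Rightarrow> 'a \<Rightarrow> 'a \<Rightarrow> 'a" where
  "star circ x y = lam circ x y - y"

definition add_subgroup :: "'a::ab_group_add set \<Rightarrow> bool" where
  "add_subgroup H \<longleftrightarrow> 0 \<in> H \<and> (\<forall>x\<in>H. \<forall>y\<in>H. x + y \<in> H \<and> - x \<in> H)"

definition add_gen :: "'a::ab_group_add set \<Rightarrow> 'a set" where
  "add_gen S = \<Inter>{H. add_subgroup H \<and> S \<subseteq> H}"

definition star_set :: "('a::ab_group_add \<Rightarrow> 'a \<Rightarrow> 'a) \<Rightarrow> 'a set \<Rightarrow> 'a set \<Rightarrow> 'a set" where
  "star_set circ P Q = add_gen ((\<lambda>(u, v). star circ u v) ` (P \<times> Q))"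

text \<open>left_series circ n is A^(n+1) and right_series circ n is A^((n+1)).\<close>
fun left_series :: "('a::ab_group_add \<Rightarrow> 'a \<Rightarrow> 'a) \<Rightarrow> nat \<Rightarrow> 'a set" where
  "left_series circ 0 = UNIV"
| "left_series circ (Suc n) = star_set circ UNIV (left_series circ n)"

fun right_series :: "('a::ab_group_add \<Rightarrow> 'a \<Rightarrow> 'a) \<Rightarrow> nat \<Rightarrow> 'a set" where
  "right_series circ 0 = UNIV"
| "right_series circ (Suc n) = star_set circ (right_series circ n) UNIV"

definition left_star_nilpotent :: "('a::ab_group_add \<Rightarrow> 'a \<Rightarrow> 'a) \<Rightarrow> bool" where
  "left_star_nilpotent circ \<longleftrightarrow> (\<exists>n. left_series circ n = {0})"

definition right_star_nilpotent :: "('a::ab_group_add \<Rightarrow> 'a \<Rightarrow> 'a) \<Rightarrow> bool" where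
  "right_star_nilpotent circ \<longleftrightarrow> (\<exists>n. right_series circ n = {0})"

definition star_nilpotent :: "('a::ab_group_add \<Rightarrow> 'a \<Rightarrow> 'a) \<Rightarrow> bool" where
  "star_nilpotent circ \<longleftrightarrow> left_star_nilpotent circ \<and> right_star_nilpotent circ"

fun lower_central :: "('g, 'b) monoid_scheme \<Rightarrow> nat \<Rightarrow> 'g set" where
  "lower_central G 0 = carrier G"
| "lower_central G (Suc n) = generate G
     {x \<otimes>\<^bsub>G\<^esub> y \<otimes>\<^bsub>G\<^esub> inv\<^bsub>G\<^esub> x \<otimes>\<^bsub>G\<^esub> inv\<^bsub>G\<^esub> y | x y. x \<in> carrier G \<and> y \<in> lower_central G n}"

definition nilpotent_group :: "('g, 'b) monoid_scheme \<Rightarrow> bool" where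
  "nilpotent_group G \<longleftrightarrow> group G \<and> (\<exists>n. lower_central G n = {\<one>\<^bsub>G\<^esub>})"

definition brace_ideal :: "('a::ab_group_add \<Rightarrow> 'a \<Rightarrow> 'a) \<Rightarrow> 'a set \<Rightarrow> bool" where
  "brace_ideal circ I \<longleftrightarrow> add_subgroup I \<and> (\<forall>a. \<forall>x\<in>I. lam circ a x \<in> I)
     \<and> (\<forall>a. \<forall>x\<in>I. a + x - a \<in> I) \<and> I \<lhd> circ_group circ"

text \<open>x + I lies in the centre of A/I, written out elementwise.\<close>
definition central_mod :: "('a::ab_group_add \<Rightarrow> 'a \<Rightarrow> 'a) \<Rightarrow> 'a set \<Rightarrow> 'a \<Rightarrow> bool" where
  "central_mod circ I x \<longleftrightarrow>
     (\<forall>y. star circ x y \<in> I \<and> star circ y x \<in> I \<and> x + y - x - y \<in> I)"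

definition centrally_nilpotent :: "('a::ab_group_add \<Rightarrow> 'a \<Rightarrow> 'a) \<Rightarrow> bool" where
  "centrally_nilpotent circ \<longleftrightarrow> (\<exists>n (I :: nat \<Rightarrow> 'a set).
     I 0 = {0} \<and> I n = UNIV \<and> (\<forall>j\<le>n. brace_ideal circ (I j)) \<and>
     (\<forall>j<n. I j \<subseteq> I (Suc j) \<and> (\<forall>x\<in>I (Suc j). central_mod circ (I j) x)))"

end

theory Submission
  imports Defs
begin

lemma sg_0: "add_subgroup H \<Longrightarrow> 0 \<in> H" unfolding add_subgroup_def by auto
lemma sg_add: "add_subgroup H \<Longrightarrow> x \<in> H \<Longrightarrow> y \<in> H \<Longrightarrow> x + y \<in> H" unfolding add_subgroup_def by auto
lemma sg_neg: "add_subgroup H \<Longrightarrow> x \<in> H \<Longrightarrow> - x \<in> H" unfolding add_subgroup_def by auto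
lemma sg_diff: "add_subgroup H \<Longrightarrow> x \<in> H \<Longrightarrow> y \<in> H \<Longrightarrow> x - y \<in> H"
  using sg_add[of H x "-y"] sg_neg[of H y] by simp
lemma sg_negD: "add_subgroup H \<Longrightarrow> - x \<in> H \<Longrightarrow> x \<in> H" using sg_neg[of H "-x"] by simp
lemma sg_cancel: "add_subgroup H \<Longrightarrow> x + y \<in> H \<Longrightarrow> y \<in> H \<Longrightarrow> x \<in> H"
  using sg_diff[of H "x+y" y] by simp
lemma sg_cancel2: "add_subgroup H \<Longrightarrow> x + y \<in> H \<Longrightarrow> x \<in> H \<Longrightarrow> y \<in> H"
  using sg_diff[of H "x+y" x] by simp
lemma sg_UNIV: "add_subgroup UNIV" unfolding add_subgroup_def by auto
lemma sg_zero: "add_subgroup {0::'a::ab_group_add}" unfolding add_subgroup_def by auto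

lemma gen_sg: "add_subgroup (add_gen S)" unfolding add_gen_def add_subgroup_def by auto
lemma gen_incl: "S \<subseteq> add_gen S" unfolding add_gen_def by auto
lemma gen_least: "add_subgroup H \<Longrightarrow> S \<subseteq> H \<Longrightarrow> add_gen S \<subseteq> H" unfolding add_gen_def by auto
lemma gen_mono: "S \<subseteq> T \<Longrightarrow> add_gen S \<subseteq> add_gen T"
  using gen_least[OF gen_sg, of S T] gen_incl[of T] by auto

lemma ss_sg: "add_subgroup (star_set circ P Q)" unfolding star_set_def by (rule gen_sg)
lemma ss_incl: "p \<in> P \<Longrightarrow> q \<in> Q \<Longrightarrow> star circ p q \<in> star_set circ P Q"
  unfolding star_set_def using gen_incl by fastforce
lemma ss_least: "add_subgroup H \<Longrightarrow> (\<And>p q. p \<in> P \<Longrightarrow> q \<in> Q \<Longrightarrow> star circ p q \<in> H) \<Longrightarrow> star_set circ P Q \<subseteq> H"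
  unfolding star_set_def by (rule gen_least) auto
lemma ss_mono: "P \<subseteq> P' \<Longrightarrow> Q \<subseteq> Q' \<Longrightarrow> star_set circ P Q \<subseteq> star_set circ P' Q'"
  by (rule ss_least[OF ss_sg]) (auto intro: ss_incl)

fun Lpow :: "('a::ab_group_add \<Rightarrow> 'a \<Rightarrow> 'a) \<Rightarrow> nat \<Rightarrow> 'a set \<Rightarrow> 'a set" where
  "Lpow c 0 S = S"
| "Lpow c (Suc n) S = star_set c UNIV (Lpow c n S)"

definition CS :: "('a::ab_group_add \<Rightarrow> 'a \<Rightarrow> 'a) \<Rightarrow> 'a set \<Rightarrow> bool" where
  "CS circ Xs \<longleftrightarrow> (\<exists>n (I :: nat \<Rightarrow> 'a set).
     I 0 = {0} \<and> I n = Xs \<and> (\<forall>j\<le>n. brace_ideal circ (I j)) \<and>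
     (\<forall>j<n. I j \<subseteq> I (Suc j) \<and> (\<forall>x\<in>I (Suc j). central_mod circ (I j) x)))"

lemma CS_UNIV: "CS circ UNIV = centrally_nilpotent circ"
  unfolding CS_def centrally_nilpotent_def by simp

lemma CS_ext:
  assumes "CS circ Xs" "brace_ideal circ Y" "Xs \<subseteq> Y" "\<And>y. y \<in> Y \<Longrightarrow> central_mod circ Xs y"
  shows "CS circ Y"
proof -
  obtain n I where I: "I 0 = {0}" "I n = Xs" "\<forall>j\<le>n. brace_ideal circ (I j)"
     "\<forall>j<n. I j \<subseteq> I (Suc j) \<and> (\<forall>x\<in>I (Suc j). central_mod circ (I j) x)"
    using assms(1) unfolding CS_def by blast
  define J where "J j = (if j \<le> n then I j else Y)" for j
  have "J 0 = {0}" "J (Suc n) = Y" using I by (auto simp: J_def)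
  moreover have "\<forall>j\<le>Suc n. brace_ideal circ (J j)"
    using I(3) assms(2) by (auto simp: J_def)
  moreover have "\<forall>j<Suc n. J j \<subseteq> J (Suc j) \<and> (\<forall>x\<in>J (Suc j). central_mod circ (J j) x)"
  proof (intro allI impI)
    fix j assume j: "j < Suc n"
    show "J j \<subseteq> J (Suc j) \<and> (\<forall>x\<in>J (Suc j). central_mod circ (J j) x)"
    proof (cases "j < n")
      case True thus ?thesis using I(4) by (auto simp: J_def)
    next
      case False hence "j = n" using j by auto
      thus ?thesis using I(2) assms(3,4) by (auto simp: J_def)
    qed
  qed
  ultimately show ?thesis unfolding CS_def by blast
qed

locale sba =
  fixes circ :: "'a::ab_group_add \<Rightarrow> 'a \<Rightarrow> 'a"
  assumes sb: "skew_brace_abelian circ"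
begin

abbreviation ci where "ci x \<equiv> inv\<^bsub>circ_group circ\<^esub> x"

lemma grp: "group (circ_group circ)" using sb unfolding skew_brace_abelian_def by auto
lemma distr: "circ x (y + z) = circ x y - x + circ x z"
  using sb unfolding skew_brace_abelian_def by auto

lemma G_simps[simp]: "carrier (circ_group circ) = UNIV" "x \<otimes>\<^bsub>circ_group circ\<^esub> y = circ x y" "\<one>\<^bsub>circ_group circ\<^esub> = 0"
  by (simp_all add: circ_group_def)

lemma assoc: "circ (circ x y) z = circ x (circ y z)"
  using group.is_monoid[OF grp] monoid.m_assoc[of "circ_group circ" x y z] by simp
lemma c0[simp]: "circ x 0 = x" using monoid.r_one[OF group.is_monoid[OF grp], of x] by simp
lemma c0'[simp]: "circ 0 x = x" using monoid.l_one[OF group.is_monoid[OF grp], of x] by simp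
lemma rinv[simp]: "circ x (ci x) = 0" using group.r_inv[OF grp, of x] by simp
lemma linv[simp]: "circ (ci x) x = 0" using group.l_inv[OF grp, of x] by simp
lemma invinv[simp]: "ci (ci x) = x" using group.inv_inv[OF grp, of x] by simp

lemma lam_add: "lam circ x (y + z) = lam circ x y + lam circ x z"
  unfolding lam_def by (simp add: distr algebra_simps)
lemma lam0[simp]: "lam circ x 0 = 0"
  using lam_add[of x 0 0] by simp
lemma lam_neg: "lam circ x (- y) = - lam circ x y"
  using minus_unique[of "lam circ x y" "lam circ x (- y)"] lam_add[of x y "-y"] by simp
lemma lam_diff: "lam circ x (y - z) = lam circ x y - lam circ x z"
  using lam_add[of x y "-z"] lam_neg[of x z] by simp
lemma circ_lam: "circ x y = x + lam circ x y" unfolding lam_def by simp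
lemma lam_comp: "lam circ (circ x y) z = lam circ x (lam circ y z)"
proof -
  have "circ x (circ y z) = circ x y - x + circ x (lam circ y z)"
    using distr[of x y "lam circ y z"] by (simp add: circ_lam[of y z])
  thus ?thesis unfolding lam_def using assoc[of x y z] by (simp add: algebra_simps)
qed
lemma lam_0x[simp]: "lam circ 0 z = z" unfolding lam_def by simp

lemma circ_star: "circ x y = x + y + star circ x y"
  unfolding star_def lam_def by simp
lemma lam_star: "lam circ x y = y + star circ x y" unfolding star_def by simp
lemma star_add: "star circ x (y + z) = star circ x y + star circ x z"
  unfolding star_def by (simp add: lam_add)
lemma star_0[simp]: "star circ x 0 = 0" unfolding star_def by simp
lemma star_0'[simp]: "star circ 0 x = 0" unfolding star_def by simp
lemma star_neg: "star circ x (- y) = - star circ x y" unfolding star_def by (simp add: lam_neg)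
lemma star_diff: "star circ x (y - z) = star circ x y - star circ x z"
  unfolding star_def by (simp add: lam_diff)
lemma lam_of_star: "lam circ a (star circ y x) = star circ (circ a y) x - star circ a x"
  unfolding star_def by (simp add: lam_diff lam_comp)

lemma conj_formula: "circ (circ a z) (ci a) = lam circ a (z + star circ z (ci a))"
proof -
  have "circ (circ a z) (ci a) = circ a (circ z (ci a))" by (rule assoc)
  also have "\<dots> = a + lam circ a (z + lam circ z (ci a))"
    unfolding circ_lam[of z "ci a"] by (rule circ_lam)
  also have "\<dots> = a + lam circ a z + lam circ a (lam circ z (ci a))"
    by (simp add: lam_add add.assoc)
  also have "lam circ z (ci a) = ci a + star circ z (ci a)" by (simp add: lam_star)
  also have "a + lam circ a z + lam circ a (ci a + star circ z (ci a))
     = (a + lam circ a (ci a)) + lam circ a z + lam circ a (star circ z (ci a))"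
    by (simp add: lam_add algebra_simps)
  also have "a + lam circ a (ci a) = 0" using rinv[of a] by (simp add: circ_lam)
  finally show ?thesis by (simp add: lam_add)
qed


lemma lam_inv_cancel: "lam circ a (lam circ (ci a) x) = x"
  by (metis lam_comp rinv lam_0x)
lemma lam_inv_cancel2: "lam circ (ci a) (lam circ a x) = x"
  by (metis lam_comp linv lam_0x)

lemma ci_lam: "ci x = - lam circ (ci x) x"
  using linv[of x] unfolding circ_lam[of "ci x" x] by (simp add: eq_neg_iff_add_eq_0)

lemma ideal_intro:
  assumes sg: "add_subgroup I" and L: "\<And>a x. x \<in> I \<Longrightarrow> lam circ a x \<in> I"
    and R: "\<And>x a. x \<in> I \<Longrightarrow> star circ x a \<in> I"
  shows "brace_ideal circ I"
proof -
  have sub: "subgroup I (circ_group circ)"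
  proof (rule subgroup.intro)
    show "I \<subseteq> carrier (circ_group circ)" by simp
    show "\<one>\<^bsub>circ_group circ\<^esub> \<in> I" using sg_0[OF sg] by simp
    fix x y assume "x \<in> I" "y \<in> I"
    thus "x \<otimes>\<^bsub>circ_group circ\<^esub> y \<in> I" using sg_add[OF sg] L by (simp add: circ_lam)
  next
    fix x assume "x \<in> I"
    thus "ci x \<in> I" using ci_lam[of x] sg_neg[OF sg] L by metis
  qed
  have "I \<lhd> circ_group circ"
  proof (rule group.normal_invI[OF grp sub])
    fix x h assume "h \<in> I"
    thus "x \<otimes>\<^bsub>circ_group circ\<^esub> h \<otimes>\<^bsub>circ_group circ\<^esub> ci x \<in> I"
      using conj_formula[of x h] L R sg_add[OF sg] by simp
  qed
  thus ?thesis unfolding brace_ideal_def using sg L by simp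
qed

context fixes I assumes I: "brace_ideal circ I"
begin
lemma id_sg: "add_subgroup I" using I unfolding brace_ideal_def by auto
lemma id_lam: "x \<in> I \<Longrightarrow> lam circ a x \<in> I" using I unfolding brace_ideal_def by auto
lemma id_normal: "I \<lhd> circ_group circ" using I unfolding brace_ideal_def by auto
lemma id_conj: "h \<in> I \<Longrightarrow> circ (circ x h) (ci x) \<in> I"
  using normal.inv_op_closed2[OF id_normal, of x h] by simp
lemma id_circ: "x \<in> I \<Longrightarrow> y \<in> I \<Longrightarrow> circ x y \<in> I"
  using subgroup.m_closed[OF normal_imp_subgroup[OF id_normal], of x y] by simp
lemma id_ci: "x \<in> I \<Longrightarrow> ci x \<in> I"
  using subgroup.m_inv_closed[OF normal_imp_subgroup[OF id_normal], of x] by simp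
lemma id_starL: "x \<in> I \<Longrightarrow> star circ a x \<in> I"
  unfolding star_def using sg_diff[OF id_sg] id_lam by auto
lemma id_starR: "x \<in> I \<Longrightarrow> star circ x a \<in> I"
proof -
  assume x: "x \<in> I"
  have "circ (circ (ci a) x) (ci (ci a)) \<in> I" using id_conj[OF x] .
  hence "lam circ (ci a) (x + star circ x a) \<in> I" using conj_formula[of "ci a" x] by simp
  hence "x + star circ x a \<in> I" using id_lam[of _ a] lam_inv_cancel by metis
  thus ?thesis using sg_cancel2[OF id_sg] x by blast
qed
end


lemma star_circ: "star circ (circ x y) z = star circ x (star circ y z) + star circ x z + star circ y z"
  by (simp add: star_def lam_comp lam_diff algebra_simps)

lemma lam_gen:
  assumes "\<And>s. s \<in> S \<Longrightarrow> lam circ a s \<in> add_gen S" "x \<in> add_gen S"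
  shows "lam circ a x \<in> add_gen S"
proof -
  have "add_subgroup {x. lam circ a x \<in> add_gen S}"
    unfolding add_subgroup_def using sg_0[OF gen_sg] sg_add[OF gen_sg] sg_neg[OF gen_sg]
    by (auto simp: lam_add lam_neg)
  hence "add_gen S \<subseteq> {x. lam circ a x \<in> add_gen S}" by (rule gen_least) (use assms in auto)
  thus ?thesis using assms by auto
qed

lemma lam_ss:
  assumes "\<And>p q. p \<in> P \<Longrightarrow> q \<in> Q \<Longrightarrow> lam circ a (star circ p q) \<in> star_set circ P Q"
    "x \<in> star_set circ P Q"
  shows "lam circ a x \<in> star_set circ P Q"
proof -
  have "\<And>s. s \<in> (\<lambda>(u, v). star circ u v) ` (P \<times> Q) \<Longrightarrow> lam circ a s \<in> add_gen ((\<lambda>(u, v). star circ u v) ` (P \<times> Q))"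
    using assms(1) unfolding star_set_def by force
  thus ?thesis using lam_gen assms(2) unfolding star_set_def by blast
qed

lemma ideal_zero: "brace_ideal circ {0}"
  by (rule ideal_intro[OF sg_zero]) auto

lemma rs_ideal: "brace_ideal circ (right_series circ n)"
proof (induction n)
  case 0 show ?case using ideal_intro[OF sg_UNIV] by simp
next
  case (Suc n)
  let ?R = "right_series circ n"
  have sub: "right_series circ (Suc n) \<subseteq> ?R"
    using ss_least[OF id_sg[OF Suc] id_starR[OF Suc]] by simp
  show ?case
  proof (rule ideal_intro)
    show "add_subgroup (right_series circ (Suc n))" by (simp add: ss_sg)
    fix x a assume x: "x \<in> right_series circ (Suc n)"
    hence "x \<in> ?R" using sub by blast
    thus "star circ x a \<in> right_series circ (Suc n)" using ss_incl[of x ?R a UNIV] by simp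
    show "lam circ a x \<in> right_series circ (Suc n)"
      unfolding right_series.simps
    proof (rule lam_ss)
      show "x \<in> star_set circ ?R UNIV" using x by simp
      fix p q assume p: "p \<in> ?R" and "q \<in> (UNIV::'a set)"
      define pt where "pt = circ (circ a p) (ci a)"
      have pt: "pt \<in> ?R" unfolding pt_def using id_conj[OF Suc p] .
      have "circ a p = circ pt a" unfolding pt_def by (simp add: assoc)
      hence "lam circ a (star circ p q) = star circ pt (star circ a q) + star circ pt q"
        by (simp add: lam_of_star star_circ)
      thus "lam circ a (star circ p q) \<in> star_set circ ?R UNIV"
        using pt by (auto intro!: sg_add[OF ss_sg] ss_incl)
    qed
  qed
qed

lemma rs_sub: "right_series circ (Suc n) \<subseteq> right_series circ n"
  using ss_least[OF id_sg[OF rs_ideal] id_starR[OF rs_ideal]] by simp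

context fixes M assumes M: "brace_ideal circ M"
begin
lemma Lp_props: "add_subgroup (Lpow circ k M) \<and> Lpow circ k M \<subseteq> M \<and> (\<forall>a. \<forall>x\<in>Lpow circ k M. lam circ a x \<in> Lpow circ k M)"
proof (induction k)
  case 0 show ?case using id_sg[OF M] id_lam[OF M] by auto
next
  case (Suc k)
  have "Lpow circ (Suc k) M \<subseteq> M"
    using ss_least[OF id_sg[OF M], of UNIV "Lpow circ k M"] Suc id_starL[OF M] by auto
  moreover have "\<forall>a. \<forall>x\<in>Lpow circ (Suc k) M. lam circ a x \<in> Lpow circ (Suc k) M"
    unfolding Lpow.simps
  proof (intro allI ballI)
    fix a x assume "x \<in> star_set circ UNIV (Lpow circ k M)"
    thus "lam circ a x \<in> star_set circ UNIV (Lpow circ k M)"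
      by (rule lam_ss[rotated]) (auto simp: lam_of_star intro!: sg_diff[OF ss_sg] ss_incl)
  qed
  ultimately show ?case by (simp add: ss_sg)
qed

lemma Lp_dec: "Lpow circ (Suc k) M \<subseteq> Lpow circ k M"
proof (induction k)
  case 0 show ?case using Lp_props[of 1] by simp
next
  case (Suc k) thus ?case by (simp add: ss_mono)
qed

lemma Lp_left: "Lpow circ k M \<subseteq> left_series circ k"
  by (induction k) (simp_all add: ss_mono)
end

lemma step_lemma:
  assumes N: "brace_ideal circ N" and M: "brace_ideal circ M" and NM: "N \<subseteq> M"
    and R: "\<And>x a. x \<in> M \<Longrightarrow> star circ x a \<in> N" and k: "Lpow circ k M \<subseteq> N"
    and CSN: "CS circ N"
  shows "CS circ M"
proof -
  define T where "T j = {u + v | u v. u \<in> N \<and> v \<in> Lpow circ j M}" for j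
  have memT: "u + v \<in> T j" if "u \<in> N" "v \<in> Lpow circ j M" for u v j
    unfolding T_def using that by blast
  have memT1: "u \<in> T j" if "u \<in> N" for u j
    using memT[OF that sg_0, of j] Lp_props[OF M, of j] by simp
  have memT2: "v \<in> T j" if "v \<in> Lpow circ j M" for v j
    using memT[OF sg_0[OF id_sg[OF N]] that] by simp
  have elimT: "\<exists>u v. y = u + v \<and> u \<in> N \<and> v \<in> Lpow circ j M" if "y \<in> T j" for y j
    using that unfolding T_def by blast
  have TM: "y \<in> M" if "y \<in> T j" for y j
  proof -
    from elimT[OF that] obtain u v where "y = u + v" "u \<in> N" "v \<in> Lpow circ j M" by blast
    moreover have "u \<in> M" "v \<in> M" using calculation NM Lp_props[OF M, of j] by auto
    ultimately show ?thesis using sg_add[OF id_sg[OF M]] by simp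
  qed
  have Tid: "brace_ideal circ (T j)" for j
  proof (rule ideal_intro)
    show "add_subgroup (T j)"
      unfolding add_subgroup_def
    proof (intro conjI ballI)
      show "0 \<in> T j" using memT1[OF sg_0[OF id_sg[OF N]]] .
      fix x y assume "x \<in> T j" "y \<in> T j"
      then obtain u1 v1 u2 v2 where uv: "x = u1 + v1" "y = u2 + v2" "u1 \<in> N" "u2 \<in> N"
        "v1 \<in> Lpow circ j M" "v2 \<in> Lpow circ j M" using elimT by metis
      have "u1 + u2 \<in> N" "- u1 \<in> N" using uv sg_add[OF id_sg[OF N]] sg_neg[OF id_sg[OF N]] by auto
      moreover have "v1 + v2 \<in> Lpow circ j M" "- v1 \<in> Lpow circ j M"
        using uv(5,6) Lp_props[OF M, of j] sg_add sg_neg by auto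
      moreover have "x + y = (u1 + u2) + (v1 + v2)" "- x = (-u1) + (-v1)" using uv by simp_all
      ultimately show "x + y \<in> T j" "- x \<in> T j" using memT by metis+
    qed
    fix x a assume x: "x \<in> T j"
    then obtain u v where uv: "x = u + v" "u \<in> N" "v \<in> Lpow circ j M" using elimT by metis
    have "lam circ a x = lam circ a u + lam circ a v" using uv by (simp add: lam_add)
    moreover have "lam circ a u \<in> N" using id_lam[OF N uv(2)] .
    moreover have "lam circ a v \<in> Lpow circ j M" using Lp_props[OF M, of j] uv(3) by auto
    ultimately show "lam circ a x \<in> T j" using memT by metis
    show "star circ x a \<in> T j" using memT1 R TM[OF x] by metis
  qed
  have Tk: "T k = N"
  proof
    show "T k \<subseteq> N"
    proof
      fix y assume "y \<in> T k"
      then obtain u v where "y = u + v" "u \<in> N" "v \<in> Lpow circ k M" using elimT by metis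
      thus "y \<in> N" using k sg_add[OF id_sg[OF N]] by auto
    qed
    show "N \<subseteq> T k" using memT1 by blast
  qed
  have T0: "T 0 = M"
  proof
    show "T 0 \<subseteq> M" using TM by blast
    show "M \<subseteq> T 0" using memT2[of _ 0] by auto
  qed
  have Tstep: "CS circ (T j)" if "CS circ (T (Suc j))" for j
  proof (rule CS_ext[OF that Tid])
    show "T (Suc j) \<subseteq> T j"
    proof
      fix y assume "y \<in> T (Suc j)"
      then obtain u v where "y = u + v" "u \<in> N" "v \<in> Lpow circ (Suc j) M" using elimT by metis
      thus "y \<in> T j" using memT Lp_dec[OF M, of j] by blast
    qed
    fix y assume y: "y \<in> T j"
    then obtain u v where uv: "y = u + v" "u \<in> N" "v \<in> Lpow circ j M" using elimT by metis
    show "central_mod circ (T (Suc j)) y" unfolding central_mod_def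
    proof (intro allI conjI)
      fix z
      show "star circ y z \<in> T (Suc j)" using memT1 R TM[OF y] by metis
      have "star circ z y = star circ z u + star circ z v" using uv by (simp add: star_add)
      moreover have "star circ z v \<in> Lpow circ (Suc j) M" using ss_incl[of z UNIV v "Lpow circ j M"] uv(3) by simp
      moreover have "star circ z u \<in> N" using id_starL[OF N uv(2)] .
      ultimately show "star circ z y \<in> T (Suc j)" using memT by metis
      show "y + z - y - z \<in> T (Suc j)" using sg_0[OF id_sg[OF Tid]] by simp
    qed
  qed
  have "CS circ (T (k - d))" for d
  proof (induction d)
    case 0 thus ?case using Tk CSN by simp
  next
    case (Suc d)
    show ?case
    proof (cases "Suc d \<le> k")
      case True
      hence "k - d = Suc (k - Suc d)" by simp
      thus ?thesis using Suc Tstep by metis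
    next
      case False thus ?thesis using Suc by simp
    qed
  qed
  from this[of k] show ?thesis using T0 by simp
qed

lemma CS_zero: "CS circ {0}"
  unfolding CS_def by (rule exI[of _ 0], rule exI[of _ "\<lambda>_. {0}"]) (simp add: ideal_zero)

lemma main_construction:
  assumes rs: "right_series circ m = {0}"
    and L: "\<And>i. \<exists>k. Lpow circ k (right_series circ i) \<subseteq> right_series circ (Suc i)"
  shows "centrally_nilpotent circ"
proof -
  have "CS circ (right_series circ (m - d))" for d
  proof (induction d)
    case 0 thus ?case using rs CS_zero by simp
  next
    case (Suc d)
    show ?case
    proof (cases "Suc d \<le> m")
      case False thus ?thesis using Suc by simp
    next
      case True
      then have e: "Suc (m - Suc d) = m - d" by simp
      obtain k where k: "Lpow circ k (right_series circ (m - Suc d)) \<subseteq> right_series circ (Suc (m - Suc d))"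
        using L by blast
      have cs: "CS circ (right_series circ (Suc (m - Suc d)))" using Suc e by simp
      show ?thesis
      proof (rule step_lemma[OF rs_ideal rs_ideal rs_sub _ k cs])
        fix x a assume "x \<in> right_series circ (m - Suc d)"
        thus "star circ x a \<in> right_series circ (Suc (m - Suc d))"
          using ss_incl[of x _ a UNIV] by simp
      qed
    qed
  qed
  from this[of m] show ?thesis using CS_UNIV[of circ] by simp
qed


lemma lc_sub: "subgroup (lower_central (circ_group circ) k) (circ_group circ)"
proof (cases k)
  case 0 thus ?thesis using group.subgroup_self[OF grp] by simp
next
  case (Suc n) thus ?thesis using group.generate_is_subgroup[OF grp] by simp
qed

lemma lc_0: "0 \<in> lower_central (circ_group circ) k"
  using subgroup.one_closed[OF lc_sub[of k]] by simp
lemma lc_circ: "x \<in> lower_central (circ_group circ) k \<Longrightarrow> y \<in> lower_central (circ_group circ) k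
   \<Longrightarrow> circ x y \<in> lower_central (circ_group circ) k"
  using subgroup.m_closed[OF lc_sub[of k], of x y] by simp
lemma lc_ci: "x \<in> lower_central (circ_group circ) k \<Longrightarrow> ci x \<in> lower_central (circ_group circ) k"
  using subgroup.m_inv_closed[OF lc_sub[of k], of x] by simp
lemma lc_comm: "g \<in> lower_central (circ_group circ) k \<Longrightarrow>
   circ (circ (circ y g) (ci y)) (ci g) \<in> lower_central (circ_group circ) (Suc k)"
  unfolding lower_central.simps by (rule generate.incl) auto

lemma circ_ci_sum: "g + ci g = - star circ g (ci g)"
  using rinv[of g] unfolding circ_star[of g "ci g"] by (simp add: eq_neg_iff_add_eq_0)

context fixes N M assumes N: "brace_ideal circ N" and M: "brace_ideal circ M"
  and R: "\<And>x a. x \<in> M \<Longrightarrow> star circ x a \<in> N"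
begin

lemma ginv: "g \<in> M \<Longrightarrow> g + ci g \<in> N"
  using circ_ci_sum[of g] sg_neg[OF id_sg[OF N] R] by simp

lemma comm_mod: assumes g: "g \<in> M"
  shows "circ (circ (circ y g) (ci y)) (ci g) - star circ y g \<in> N"
proof -
  define w where "w = circ (circ y g) (ci y)"
  have w: "w \<in> M" unfolding w_def by (rule id_conj[OF M g])
  define n1 where "n1 = lam circ y (star circ g (ci y))"
  have n1: "n1 \<in> N" unfolding n1_def using id_lam[OF N R[OF g]] .
  have "w = lam circ y (g + star circ g (ci y))" unfolding w_def by (rule conj_formula)
  hence w2: "w = g + star circ y g + n1" unfolding n1_def by (simp add: lam_star star_add ac_simps)
  have "circ w (ci g) = w + ci g + star circ w (ci g)" by (rule circ_star)
  also have "\<dots> = star circ y g + (n1 + (g + ci g) + star circ w (ci g))"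
    by (simp add: w2 algebra_simps)
  finally have "circ w (ci g) - star circ y g = n1 + (g + ci g) + star circ w (ci g)" by simp
  moreover have "n1 + (g + ci g) + star circ w (ci g) \<in> N"
    using n1 ginv[OF g] R[OF w] sg_add[OF id_sg[OF N]] by auto
  ultimately show ?thesis unfolding w_def by simp
qed

lemma lc_claim: "\<forall>x\<in>Lpow circ k M. \<exists>g. g \<in> lower_central (circ_group circ) k \<and> g \<in> M \<and> x - g \<in> N"
proof (induction k)
  case 0 show ?case using sg_0[OF id_sg[OF N]] by auto
next
  case (Suc k)
  let ?LC = "lower_central (circ_group circ) (Suc k)"
  define S where "S = {x. \<exists>g. g \<in> ?LC \<and> g \<in> M \<and> x - g \<in> N}"
  have "add_subgroup S" unfolding add_subgroup_def
  proof (intro conjI ballI)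
    show "0 \<in> S" unfolding S_def using lc_0[of "Suc k"] sg_0[OF id_sg[OF M]] sg_0[OF id_sg[OF N]] by force
    fix x y assume "x \<in> S" "y \<in> S"
    then obtain g1 g2 where g: "g1 \<in> ?LC" "g1 \<in> M" "x - g1 \<in> N" "g2 \<in> ?LC" "g2 \<in> M" "y - g2 \<in> N"
      unfolding S_def by blast
    have e1: "x + y - circ g1 g2 = (x - g1) + (y - g2) - star circ g1 g2"
      by (simp add: circ_star algebra_simps)
    have "(x - g1) + (y - g2) - star circ g1 g2 \<in> N"
      using g R[OF g(2)] sg_add[OF id_sg[OF N]] sg_diff[OF id_sg[OF N]] by auto
    hence m1: "x + y - circ g1 g2 \<in> N" by (simp only: e1)
    have "circ g1 g2 \<in> ?LC" "circ g1 g2 \<in> M"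
      using lc_circ[OF g(1) g(4)] id_circ[OF M g(2) g(5)] by blast+
    with m1 show "x + y \<in> S" unfolding S_def by blast
    have e2: "- x - ci g1 = - (x - g1) - (g1 + ci g1)" by (simp add: algebra_simps)
    have "- (x - g1) - (g1 + ci g1) \<in> N"
      by (rule sg_diff[OF id_sg[OF N] sg_neg[OF id_sg[OF N] g(3)] ginv[OF g(2)]])
    hence m2: "- x - ci g1 \<in> N" by (simp only: e2)
    have "ci g1 \<in> ?LC" "ci g1 \<in> M" using lc_ci[OF g(1)] id_ci[OF M g(2)] by blast+
    with m2 show "- x \<in> S" unfolding S_def by blast
  qed
  moreover have "star circ y x \<in> S" if x: "x \<in> Lpow circ k M" for y x
  proof -
    obtain g where g: "g \<in> lower_central (circ_group circ) k" "g \<in> M" "x - g \<in> N"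
      using Suc x by blast
    define c where "c = circ (circ (circ y g) (ci y)) (ci g)"
    have c1: "c \<in> ?LC" unfolding c_def using lc_comm[OF g(1)] .
    have c2: "c \<in> M" unfolding c_def using id_circ[OF M id_conj[OF M g(2)] id_ci[OF M g(2)]] .
    have e: "star circ y x - c = star circ y (x - g) - (c - star circ y g)"
      by (simp add: star_diff algebra_simps)
    have "star circ y (x - g) - (c - star circ y g) \<in> N"
      using id_starL[OF N g(3)] comm_mod[OF g(2), of y] sg_diff[OF id_sg[OF N]] unfolding c_def by auto
    hence "star circ y x - c \<in> N" by (simp only: e)
    thus ?thesis unfolding S_def using c1 c2 by blast
  qed
  ultimately have "star_set circ UNIV (Lpow circ k M) \<subseteq> S" by (intro ss_least) auto
  thus ?case unfolding S_def by auto
qed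

lemma nil_L: assumes "lower_central (circ_group circ) n = {0}" shows "Lpow circ n M \<subseteq> N"
  using lc_claim[of n] assms by auto

end


lemma ls_0: "0 \<in> left_series circ k"
  by (cases k) (simp_all add: sg_0[OF ss_sg])
lemma rs_0: "0 \<in> right_series circ k"
  by (cases k) (simp_all add: sg_0[OF ss_sg])

lemma comm_central:
  assumes J: "brace_ideal circ J" and c: "central_mod circ J y"
  shows "circ (circ (circ x y) (ci x)) (ci y) \<in> J"
proof -
  define w where "w = circ (circ x y) (ci x)"
  have "w = lam circ x (y + star circ y (ci x))" unfolding w_def by (rule conj_formula)
  hence "w = y + (star circ x y + lam circ x (star circ y (ci x)))"
    by (simp add: lam_add lam_star[of x y] add.assoc)
  moreover have "star circ x y + lam circ x (star circ y (ci x)) \<in> J"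
    using c id_lam[OF J] sg_add[OF id_sg[OF J]] unfolding central_mod_def by blast
  ultimately obtain j where j: "j \<in> J" "w = y + j" by blast
  have "circ (ci y) w = circ (ci y) y - ci y + circ (ci y) j" unfolding j(2) by (rule distr)
  also have "\<dots> = lam circ (ci y) j" by (simp add: lam_def)
  finally have cw: "circ (ci y) w \<in> J" using id_lam[OF J j(1)] by simp
  have "circ y (circ (ci y) w) = w" by (simp add: assoc[symmetric])
  hence "circ w (ci y) = circ (circ y (circ (ci y) w)) (ci y)" by simp
  thus ?thesis using id_conj[OF J cw] unfolding w_def by simp
qed

context fixes n and I :: "nat \<Rightarrow> 'a set"
  assumes I: "I 0 = {0}" "I n = UNIV" "\<forall>j\<le>n. brace_ideal circ (I j)"
     "\<forall>j<n. I j \<subseteq> I (Suc j) \<and> (\<forall>x\<in>I (Suc j). central_mod circ (I j) x)"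
begin

lemma ch_left: "k \<le> n \<Longrightarrow> left_series circ k \<subseteq> I (n - k)"
proof (induction k)
  case 0 thus ?case using I by simp
next
  case (Suc k)
  define j where "j = n - Suc k"
  have jn: "j < n" "Suc j = n - k" using Suc.prems unfolding j_def by auto
  have idj: "brace_ideal circ (I j)" using I(3) jn by simp
  have "left_series circ (Suc k) \<subseteq> star_set circ UNIV (I (Suc j))"
    using Suc jn by (simp add: ss_mono)
  also have "\<dots> \<subseteq> I j"
  proof (rule ss_least[OF id_sg[OF idj]])
    fix p q assume "q \<in> I (Suc j)"
    thus "star circ p q \<in> I j" using I(4) jn unfolding central_mod_def by blast
  qed
  finally show ?case unfolding j_def .
qed

lemma ch_right: "k \<le> n \<Longrightarrow> right_series circ k \<subseteq> I (n - k)"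
proof (induction k)
  case 0 thus ?case using I by simp
next
  case (Suc k)
  define j where "j = n - Suc k"
  have jn: "j < n" "Suc j = n - k" using Suc.prems unfolding j_def by auto
  have idj: "brace_ideal circ (I j)" using I(3) jn by simp
  have "right_series circ (Suc k) \<subseteq> star_set circ (I (Suc j)) UNIV"
    using Suc jn by (simp add: ss_mono)
  also have "\<dots> \<subseteq> I j"
  proof (rule ss_least[OF id_sg[OF idj]])
    fix p q assume "p \<in> I (Suc j)"
    thus "star circ p q \<in> I j" using I(4) jn unfolding central_mod_def by blast
  qed
  finally show ?case unfolding j_def .
qed

lemma ch_lc: "k \<le> n \<Longrightarrow> lower_central (circ_group circ) k \<subseteq> I (n - k)"
proof (induction k)
  case 0 thus ?case using I by simp
next
  case (Suc k)
  define j where "j = n - Suc k"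
  have jn: "j < n" "Suc j = n - k" using Suc.prems unfolding j_def by auto
  have idj: "brace_ideal circ (I j)" using I(3) jn by simp
  have sub: "lower_central (circ_group circ) k \<subseteq> I (Suc j)" using Suc jn by simp
  have "lower_central (circ_group circ) (Suc k) \<subseteq> I j"
    unfolding lower_central.simps
  proof (rule group.generate_subgroup_incl[OF grp _ normal_imp_subgroup[OF id_normal[OF idj]]])
    show "{x \<otimes>\<^bsub>circ_group circ\<^esub> y \<otimes>\<^bsub>circ_group circ\<^esub> ci x \<otimes>\<^bsub>circ_group circ\<^esub> ci y |x y.
        x \<in> carrier (circ_group circ) \<and> y \<in> lower_central (circ_group circ) k} \<subseteq> I j"
    proof clarify
      fix x y assume "y \<in> lower_central (circ_group circ) k"
      hence "central_mod circ (I j) y" using sub I(4) jn by blast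
      thus "x \<otimes>\<^bsub>circ_group circ\<^esub> y \<otimes>\<^bsub>circ_group circ\<^esub> ci x \<otimes>\<^bsub>circ_group circ\<^esub> ci y \<in> I j"
        using comm_central[OF idj] by simp
    qed
  qed
  thus ?case unfolding j_def .
qed

end

lemma cn_all:
  assumes "centrally_nilpotent circ"
  shows "left_star_nilpotent circ \<and> right_star_nilpotent circ \<and> nilpotent_group (circ_group circ)"
proof -
  obtain n I where I: "I 0 = {0}" "I n = UNIV" "\<forall>j\<le>n. brace_ideal circ (I j)"
     "\<forall>j<n. I j \<subseteq> I (Suc j) \<and> (\<forall>x\<in>I (Suc j). central_mod circ (I j) x)"
    using assms unfolding centrally_nilpotent_def by (elim exE conjE) (rule that; assumption)
  have "left_series circ n \<subseteq> I (n - n)" by (rule ch_left[where I=I and n=n, OF I]) simp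
  hence "left_series circ n \<subseteq> {0}" using I(1) by simp
  hence l: "left_series circ n = {0}" using ls_0[of n] by blast
  have "right_series circ n \<subseteq> I (n - n)" by (rule ch_right[where I=I and n=n, OF I]) simp
  hence "right_series circ n \<subseteq> {0}" using I(1) by simp
  hence r: "right_series circ n = {0}" using rs_0[of n] by blast
  have "lower_central (circ_group circ) n \<subseteq> I (n - n)" by (rule ch_lc[where I=I and n=n, OF I]) simp
  hence "lower_central (circ_group circ) n \<subseteq> {0}" using I(1) by simp
  hence "lower_central (circ_group circ) n = {0}" using lc_0[of n] by blast
  hence "lower_central (circ_group circ) n = {\<one>\<^bsub>circ_group circ\<^esub>}" by simp
  hence "nilpotent_group (circ_group circ)" unfolding nilpotent_group_def using grp by blast
  moreover have "left_star_nilpotent circ" unfolding left_star_nilpotent_def using l by blast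
  moreover have "right_star_nilpotent circ" unfolding right_star_nilpotent_def using r by blast
  ultimately show ?thesis by blast
qed

lemma sn_cn: assumes "star_nilpotent circ" shows "centrally_nilpotent circ"
proof -
  obtain n0 where n0: "left_series circ n0 = {0}"
    using assms unfolding star_nilpotent_def left_star_nilpotent_def by blast
  obtain m where m: "right_series circ m = {0}"
    using assms unfolding star_nilpotent_def right_star_nilpotent_def by blast
  show ?thesis
  proof (rule main_construction[OF m])
    fix i
    have "Lpow circ n0 (right_series circ i) \<subseteq> right_series circ (Suc i)"
      using Lp_left[OF rs_ideal, of n0 i] n0 rs_0[of "Suc i"] by auto
    thus "\<exists>k. Lpow circ k (right_series circ i) \<subseteq> right_series circ (Suc i)" by blast
  qed
qed

lemma rn_cn: assumes "right_star_nilpotent circ" "nilpotent_group (circ_group circ)"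
  shows "centrally_nilpotent circ"
proof -
  obtain n where n: "lower_central (circ_group circ) n = {0}"
    using assms(2) unfolding nilpotent_group_def by auto
  obtain m where m: "right_series circ m = {0}"
    using assms(1) unfolding right_star_nilpotent_def by blast
  show ?thesis
  proof (rule main_construction[OF m])
    fix i
    have "Lpow circ n (right_series circ i) \<subseteq> right_series circ (Suc i)"
    proof (rule nil_L[OF rs_ideal rs_ideal _ n])
      fix x a assume "x \<in> right_series circ i"
      thus "star circ x a \<in> right_series circ (Suc i)" using ss_incl[of x _ a UNIV] by simp
    qed
    thus "\<exists>k. Lpow circ k (right_series circ i) \<subseteq> right_series circ (Suc i)" by blast
  qed
qed

end

theorem mainTheorem9:
  fixes circ :: "'a::ab_group_add \<Rightarrow> 'a \<Rightarrow> 'a"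
  assumes "skew_brace_abelian circ"
  shows "(star_nilpotent circ \<longleftrightarrow>
            right_star_nilpotent circ \<and> nilpotent_group (circ_group circ))
       \<and> (star_nilpotent circ \<longleftrightarrow> centrally_nilpotent circ)"
proof -
  interpret sba circ by (rule sba.intro[OF assms])
  have cn: "centrally_nilpotent circ \<Longrightarrow> star_nilpotent circ \<and> right_star_nilpotent circ \<and> nilpotent_group (circ_group circ)"
    using cn_all unfolding star_nilpotent_def by blast
  show ?thesis using cn sn_cn rn_cn by blast
qed

end
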